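(* Let $p_1,p_2\in\mathbb{R}^3$ be distinct points and let $\pi_1,\pi_2\subset\mathbb{R}^3$ be two distinct affine $2$-planes, both containing $p_1$ and $p_2$ and neither passing through the origin $O$. For $p_3\in\pi_1\setminus\pi_2$ and $p_4\in\pi_2\setminus\pi_1$ set \[ \omega(p_1,p_2;p_3,p_4)=\frac{\det(p_2-p_1,\,p_3-p_1,\,p_4-p_1)}{\det(p_1,p_2,p_3)\,\det(p_1,p_2,p_4)} . \] Then the value $\omega(p_1,p_2;p_3,p_4)$ does not depend on the choice of $p_3\in\pi_1\setminus\pi_2$ and $p_4\in\pi_2\setminus\pi_1$.
   Context: Points of $\mathbb{R}^3$ are identified with their coordinate vectors, and $\det(u,v,w)$ denotes the determinant of the $3\times 3$ matrix with columns $u,v,w$. For points $p_1,p_2,p_3,p_4$ such that ${\rm span}(p_1,p_2,p_3)$ and ${\rm span}(p_1,p_2,p_4)$ (minimal affine subspaces containing the points) are $2$-dimensional and do not contain $O$, the quantity $\omega(p_1,p_2;p_3,p_4)$ above is called the projective lifting coefficient on $p_1p_2$ induced by these two planes. *)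

theory Defs
  imports "HOL-Analysis.Analysis"
begin

definition det3 :: "real^3 \<Rightarrow> real^3 \<Rightarrow> real^3 \<Rightarrow> real" where
  "det3 u v w = det (transpose (vector [u, v, w] :: real^3^3))"

definition omega :: "real^3 \<Rightarrow> real^3 \<Rightarrow> real^3 \<Rightarrow> real^3 \<Rightarrow> real" where
  "omega p1 p2 p3 p4 =
     det3 (p2 - p1) (p3 - p1) (p4 - p1) / (det3 p1 p2 p3 * det3 p1 p2 p4)"

end

theory Submission imports Defs begin
lemma det3_exp: "det3 u v w = u$1 * v$2 * w$3 + v$1 * w$2 * u$3 + w$1 * u$2 * v$3 - u$1 * w$2 * v$3 - v$1 * u$2 * w$3 - w$1 * v$2 * u$3"
  unfolding det3_def det_3 by (simp add: transpose_def vector_3 algebra_simps)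
lemma d_add: "det3 u v (a + b) = det3 u v a + det3 u v b"
  unfolding det3_exp by (simp add: algebra_simps)
lemma d_diff: "det3 u v (a - b) = det3 u v a - det3 u v b"
  unfolding det3_exp by (simp add: algebra_simps)
lemma d_scale: "det3 u v (c *\<^sub>R a) = c * det3 u v a"
  unfolding det3_exp by (simp add: algebra_simps)
lemma d_0: "det3 u v u = 0" "det3 u v v = 0"
  unfolding det3_exp by (simp_all add: algebra_simps)
lemma d_perm: "det3 u v w = det3 v w u" "det3 u v w = - det3 v u w"
  unfolding det3_exp by (simp_all add: algebra_simps)
lemma omega3: assumes "t \<noteq> 0"
  shows "omega p1 p2 (p1 + s *\<^sub>R (p2 - p1) + t *\<^sub>R (p3 - p1)) p4 = omega p1 p2 p3 p4"
proof -
  have e: "p1 + s *\<^sub>R (p2 - p1) + t *\<^sub>R (p3 - p1) - p1 = s *\<^sub>R (p2 - p1) + t *\<^sub>R (p3 - p1)" by simp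
  have a: "det3 (p2 - p1) (p1 + s *\<^sub>R (p2 - p1) + t *\<^sub>R (p3 - p1) - p1) (p4 - p1) = t * det3 (p2 - p1) (p3 - p1) (p4 - p1)"
  proof -
    have "det3 (p2 - p1) (p1 + s *\<^sub>R (p2 - p1) + t *\<^sub>R (p3 - p1) - p1) (p4 - p1)
      = det3 (p4 - p1) (p2 - p1) (s *\<^sub>R (p2 - p1) + t *\<^sub>R (p3 - p1))"
      unfolding e by (rule d_perm(1)[symmetric])
    also have "\<dots> = t * det3 (p4 - p1) (p2 - p1) (p3 - p1)"
      by (simp add: d_add d_scale d_0)
    also have "det3 (p4 - p1) (p2 - p1) (p3 - p1) = det3 (p2 - p1) (p3 - p1) (p4 - p1)"
      by (rule d_perm(1))
    finally show ?thesis .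
  qed
  have b: "det3 p1 p2 (p1 + s *\<^sub>R (p2 - p1) + t *\<^sub>R (p3 - p1)) = t * det3 p1 p2 p3"
    by (simp add: d_add d_diff d_scale d_0)
  show ?thesis unfolding omega_def a b using assms by simp
qed
lemma omega4: assumes "t \<noteq> 0"
  shows "omega p1 p2 p3 (p1 + s *\<^sub>R (p2 - p1) + t *\<^sub>R (p4 - p1)) = omega p1 p2 p3 p4"
proof -
  have e: "p1 + s *\<^sub>R (p2 - p1) + t *\<^sub>R (p4 - p1) - p1 = s *\<^sub>R (p2 - p1) + t *\<^sub>R (p4 - p1)" by simp
  have a: "det3 (p2 - p1) (p3 - p1) (p1 + s *\<^sub>R (p2 - p1) + t *\<^sub>R (p4 - p1) - p1) = t * det3 (p2 - p1) (p3 - p1) (p4 - p1)"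
    unfolding e by (simp add: d_add d_scale d_0)
  have b: "det3 p1 p2 (p1 + s *\<^sub>R (p2 - p1) + t *\<^sub>R (p4 - p1)) = t * det3 p1 p2 p4"
    by (simp add: d_add d_diff d_scale d_0)
  show ?thesis unfolding omega_def a b using assms by simp
qed
lemma rep:
  fixes S T :: "(real^3) set"
  assumes "affine S" "aff_dim S = 2" "affine T" "p1 \<noteq> p2" "p1 \<in> S" "p2 \<in> S" "p1 \<in> T" "p2 \<in> T"
    "p3 \<in> S - T" "q \<in> S - T"
  shows "\<exists>s t. t \<noteq> 0 \<and> q = p1 + s *\<^sub>R (p2 - p1) + t *\<^sub>R (p3 - p1)"
proof -
  have hT: "affine hull {p1,p2} \<subseteq> T" using assms by (simp add: hull_minimal)
  have n3: "p3 \<notin> affine hull {p1,p2}" using hT assms by blast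
  have "aff_dim {p3,p1,p2} = 2" using n3 assms(4) by (simp add: aff_dim_insert)
  hence d: "aff_dim (affine hull {p3,p1,p2}) = aff_dim S" using assms(2) by simp
  have sub: "affine hull {p3,p1,p2} \<subseteq> S" using assms by (simp add: hull_minimal)
  have "affine hull {p3,p1,p2} = S"
    by (rule affine_dim_equal[OF affine_affine_hull assms(1) _ sub d]) simp
  then obtain u v w where q: "q = u *\<^sub>R p3 + v *\<^sub>R p1 + w *\<^sub>R p2" "u + v + w = 1"
    using assms(10) unfolding affine_hull_3 by blast
  have v: "v = 1 - u - w" using q(2) by simp
  have q2: "q = p1 + w *\<^sub>R (p2 - p1) + u *\<^sub>R (p3 - p1)"
    unfolding q(1) v by (simp add: algebra_simps)
  have "u \<noteq> 0"
  proof
    assume "u = 0"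
    hence "q \<in> affine hull {p1,p2}" using q unfolding affine_hull_2 by auto
    thus False using hT assms by blast
  qed
  thus ?thesis using q2 by blast
qed


theorem proposition2p2:
  fixes p1 p2 :: "real^3" and \<pi>1 \<pi>2 :: "(real^3) set"
  assumes "p1 \<noteq> p2"
    and "affine \<pi>1" and "aff_dim \<pi>1 = 2"
    and "affine \<pi>2" and "aff_dim \<pi>2 = 2"
    and "\<pi>1 \<noteq> \<pi>2"
    and "p1 \<in> \<pi>1" and "p2 \<in> \<pi>1" and "p1 \<in> \<pi>2" and "p2 \<in> \<pi>2"
    and "0 \<notin> \<pi>1" and "0 \<notin> \<pi>2"
  shows "\<forall>p3 p4 q3 q4.
           p3 \<in> \<pi>1 - \<pi>2 \<and> p4 \<in> \<pi>2 - \<pi>1 \<and> q3 \<in> \<pi>1 - \<pi>2 \<and> q4 \<in> \<pi>2 - \<pi>1 \<longrightarrow>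
           omega p1 p2 p3 p4 = omega p1 p2 q3 q4"
  proof (intro allI impI)
  fix p3 p4 q3 q4
  assume h: "p3 \<in> \<pi>1 - \<pi>2 \<and> p4 \<in> \<pi>2 - \<pi>1 \<and> q3 \<in> \<pi>1 - \<pi>2 \<and> q4 \<in> \<pi>2 - \<pi>1"
  obtain s t where st: "t \<noteq> 0" "q3 = p1 + s *\<^sub>R (p2 - p1) + t *\<^sub>R (p3 - p1)"
    using rep[of \<pi>1 \<pi>2 p1 p2 p3 q3] assms h by blast
  obtain s' t' where st': "t' \<noteq> 0" "q4 = p1 + s' *\<^sub>R (p2 - p1) + t' *\<^sub>R (p4 - p1)"
    using rep[of \<pi>2 \<pi>1 p1 p2 p4 q4] assms h by blast
  show "omega p1 p2 p3 p4 = omega p1 p2 q3 q4"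
    unfolding st(2) st'(2) omega3[OF st(1)] omega4[OF st'(1)] ..
qed

end
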